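(* Let $v^1,\dots,v^k$ be a basis of $\mathfrak h^*$, let $G=(G^{ab})$ with $G^{ab}=(v^a|v^b)$ be the Gram matrix and $(G_{ab})=G^{-1}$ its inverse. For a real root $\alpha=\sum_{a=1}^k\alpha_a v^a$ define the real $k\times k$ matrix $X(\alpha)$ by $$X(\alpha)_{ab}=-\tfrac12\alpha_a\alpha_b+\tfrac14 G_{ab}.$$ Then for all $\alpha,\beta\in\lambda$ the matrices $X(\alpha)$ are symmetric, $X(\alpha)GX(\beta)-X(\beta)GX(\alpha)=0$ if $(\alpha|\beta)=0$, and $X(\alpha)GX(\beta)+X(\beta)GX(\alpha)=\frac12X(\alpha\pm\beta)$ if $(\alpha|\beta)=\mp1$ and $\alpha\pm\beta\in\lambda$. In particular, with $\phi^a_\gamma=v^a\otimes f_\gamma$ in the Clifford algebra $\mathcal S$ defined below and $\widehat J(\alpha_i):=\sum_{a,b=1}^k\sum_{\gamma,\delta=1}^lX(\alpha_i)_{ab}\Gamma(\alpha_i)_{\gamma\delta}\phi^a_\gamma\phi^b_\delta$ (the image of $X(\alpha_i)\otimes\Gamma(\alpha_i)$ in $\mathcal S$), the assignment $X_i\mapsto\widehat J(\alpha_i)$ extends to a Lie algebra homomorphism $\mathfrak k\to(\mathcal S,[\cdot,\cdot])$, i.e. a finite-dimensional representation of $\mathfrak k$.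
   Context: Let $A=(a_{ij})_{1\le i,j\le n}$ be a symmetrizable simply laced generalized Cartan matrix (off-diagonal entries $0$ or $-1$); the Dynkin diagram has an edge between $i\ne j$ iff $a_{ij}=-1$. Let $\mathfrak g$ be the split real Kac–Moody algebra of $A$ with Chevalley generators $e_i,f_i$, Cartan subalgebra $\mathfrak h$ (from a real realization, so $\dim\mathfrak h^*=2n-\mathrm{rk}(A)$), simple roots $\alpha_1,\dots,\alpha_n\in\mathfrak h^*$, real roots $\Delta^{\mathrm{re}}$, and let $(\cdot|\cdot)$ be the nondegenerate invariant symmetric bilinear form induced on $\mathfrak h^*$, with $(\alpha_i|\alpha_j)=a_{ij}$. Let $\mathfrak k$ be the fixed-point subalgebra of the Chevalley involution ($e_i\mapsto -f_i$, $f_i\mapsto-e_i$, $h\mapsto -h$), with Berman generators $X_i=e_i-f_i$; $\mathfrak k$ is presented by generators $X_1,\dots,X_n$ and relations $[X_i,[X_i,X_j]]=-X_j$ if $a_{ij}=-1$, $[X_i,X_j]=0$ if $a_{ij}=0$. Let $\lambda$ be the set of real roots consisting of the simple roots together with all $\alpha_i+\alpha_j$ for $i,j$ forming an edge of the Dynkin diagram. A generalized spin representation is a representation $\rho$ of $\mathfrak k$ with $\rho(X_i)^2=-\frac14\mathrm{id}$. Fix a finite-dimensional real vector space $S$ with positive definite inner product $q_2$ and orthonormal basis $f_1,\dots,f_l$, and a generalized spin representation $\rho:\mathfrak k\to\mathrm{End}(S)$ whose values $\rho(X_i)$ are anti-symmetric real matrices in this basis (such exist, e.g. by realifying the generalized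 spin representations with compact image of Hainke–Köhl–Levy); put $\Gamma(\alpha_i):=2\rho(X_i)$. Let $q$ be the symmetric bilinear form on $\mathfrak h^*\otimes S$ with $q(v^a\otimes f_\gamma,v^b\otimes f_\delta)=G^{ab}\delta_{\gamma\delta}$ and $\mathcal S$ the Clifford algebra: the tensor algebra of $\mathfrak h^*\otimes S$ modulo the ideal generated by $w\otimes w-\frac12q(w,w)\cdot1$ (so $vw+wv=q(v,w)$). *)

theory Defs
  imports "HOL-Analysis.Analysis"
begin

definition simply_laced_symmetrizable_gcm :: "('n::finite \<Rightarrow> 'n \<Rightarrow> int) \<Rightarrow> bool" where
  "simply_laced_symmetrizable_gcm A \<longleftrightarrow>
     (\<forall>i. A i i = 2) \<and>
     (\<forall>i j. i \<noteq> j \<longrightarrow> A i j = 0 \<or> A i j = -1) \<and>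
     (\<forall>i j. A i j = 0 \<longleftrightarrow> A j i = 0) \<and>
     (\<exists>d::'n \<Rightarrow> real. (\<forall>i. d i > 0) \<and> (\<forall>i j. d i * A i j = d j * A j i))"

definition cartan_matrix :: "('n::finite \<Rightarrow> 'n \<Rightarrow> int) \<Rightarrow> real^'n^'n" where
  "cartan_matrix A = (\<chi> i j. real_of_int (A i j))"

definition lam_set :: "('n \<Rightarrow> 'n \<Rightarrow> int) \<Rightarrow> ('n \<Rightarrow> 'h::real_vector) \<Rightarrow> 'h set" where
  "lam_set A al = range al \<union> {al i + al j | i j. A i j = -1}"

definition coord :: "('k::finite \<Rightarrow> 'h::real_vector) \<Rightarrow> 'h \<Rightarrow> 'k \<Rightarrow> real" where
  "coord v x = (THE c. x = (\<Sum>a\<in>UNIV. c a *\<^sub>R v a))"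

definition gram :: "('h \<Rightarrow> 'h \<Rightarrow> real) \<Rightarrow> ('k::finite \<Rightarrow> 'h) \<Rightarrow> real^'k^'k" where
  "gram B v = (\<chi> a b. B (v a) (v b))"

definition Xmat :: "('h \<Rightarrow> 'h \<Rightarrow> real) \<Rightarrow> ('k::finite \<Rightarrow> 'h::real_vector) \<Rightarrow> 'h \<Rightarrow> real^'k^'k" where
  "Xmat B v x = (\<chi> a b. - (1/2) * coord v x a * coord v x b
                        + (1/4) * (matrix_inv (gram B v)) $ a $ b)"

definition comm :: "'b::ring \<Rightarrow> 'b \<Rightarrow> 'b" where
  "comm x y = x * y - y * x"

text \<open>Jhat(alpha_i) = sum_{a,b,gamma,delta} X(alpha_i)_{ab} Gamma(alpha_i)_{gamma delta} phi^a_gamma phi^b_delta,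
  where Gamma(alpha_i) = 2 rho(X_i).\<close>

definition Jhat :: "('h \<Rightarrow> 'h \<Rightarrow> real) \<Rightarrow> ('k::finite \<Rightarrow> 'h::real_vector) \<Rightarrow> 'h \<Rightarrow> real^'l::finite^'l
                    \<Rightarrow> ('k \<Rightarrow> 'l \<Rightarrow> 'b::real_algebra_1) \<Rightarrow> 'b" where
  "Jhat B v x Gam phi =
     (\<Sum>a\<in>UNIV. \<Sum>b\<in>UNIV. \<Sum>g\<in>UNIV. \<Sum>d\<in>UNIV.
        (Xmat B v x $ a $ b * Gam $ g $ d) *\<^sub>R (phi a g * phi b d))"

end

theory Submission
  imports Defs
begin


definition Jm :: "('i::finite \<Rightarrow> 'i \<Rightarrow> real) \<Rightarrow> ('i \<Rightarrow> 'b::real_algebra_1) \<Rightarrow> 'b" where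
  "Jm M f = (\<Sum>i\<in>UNIV. \<Sum>j\<in>UNIV. M i j *\<^sub>R (f i * f j))"

definition mm :: "('i::finite \<Rightarrow> 'i \<Rightarrow> real) \<Rightarrow> ('i \<Rightarrow> 'i \<Rightarrow> real) \<Rightarrow> 'i \<Rightarrow> 'i \<Rightarrow> real" where
  "mm M N i j = (\<Sum>k\<in>UNIV. M i k * N k j)"

lemma cliff_step1:
  fixes f :: "'i \<Rightarrow> 'b::real_algebra_1"
  assumes rel: "\<And>i j. f i * f j + f j * f i = Q i j *\<^sub>R 1"
  shows "f i * f j * f k - f k * (f i * f j) = Q j k *\<^sub>R f i - Q i k *\<^sub>R f j"
proof -
  have 1: "f j * f k = Q j k *\<^sub>R 1 - f k * f j" using rel[of j k] by (simp add: algebra_simps)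
  have 2: "f k * f i = Q i k *\<^sub>R 1 - f i * f k" using rel[of i k] by (simp add: algebra_simps)
  have a: "f i * f j * f k = Q j k *\<^sub>R f i - f i * f k * f j"
    by (simp only: mult.assoc 1 right_diff_distrib mult_scaleR_right mult_1_right)
  have b: "f k * (f i * f j) = Q i k *\<^sub>R f j - f i * f k * f j"
    by (simp only: mult.assoc[symmetric] 2 left_diff_distrib mult_scaleR_left mult_1_left)
  show ?thesis unfolding a b by simp
qed

lemma cliff_step2:
  fixes f :: "'i::finite \<Rightarrow> 'b::real_algebra_1"
  assumes rel: "\<And>i j. f i * f j + f j * f i = Q i j *\<^sub>R 1"
    and anti: "\<And>i j. M j i = - M i j"
  shows "Jm M f * f k - f k * Jm M f = (\<Sum>i\<in>UNIV. (2 * mm M Q i k) *\<^sub>R f i)"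
proof -
  have e1: "Jm M f * f k = (\<Sum>i\<in>UNIV. \<Sum>j\<in>UNIV. M i j *\<^sub>R (f i * f j * f k))"
    unfolding Jm_def by (simp add: sum_distrib_right)
  have e2: "f k * Jm M f = (\<Sum>i\<in>UNIV. \<Sum>j\<in>UNIV. M i j *\<^sub>R (f k * (f i * f j)))"
    unfolding Jm_def by (simp add: sum_distrib_left)
  have "Jm M f * f k - f k * Jm M f
      = (\<Sum>i\<in>UNIV. \<Sum>j\<in>UNIV. M i j *\<^sub>R (f i * f j * f k - f k * (f i * f j)))"
    unfolding e1 e2 by (simp add: sum_subtractf[symmetric] scaleR_diff_right)
  also have "\<dots> = (\<Sum>i\<in>UNIV. \<Sum>j\<in>UNIV. (M i j * Q j k) *\<^sub>R f i)
                 - (\<Sum>i\<in>UNIV. \<Sum>j\<in>UNIV. (M i j * Q i k) *\<^sub>R f j)"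
  proof -
    have "\<And>i j. M i j *\<^sub>R (f i * f j * f k - f k * (f i * f j)) = (M i j * Q j k) *\<^sub>R f i - (M i j * Q i k) *\<^sub>R f j"
      using cliff_step1[of f Q, OF rel] by (simp add: scaleR_diff_right)
    then show ?thesis by (simp only: sum_subtractf)
  qed
  also have "(\<Sum>i\<in>UNIV. \<Sum>j\<in>UNIV. (M i j * Q i k) *\<^sub>R f j)
      = (\<Sum>j\<in>UNIV. \<Sum>i\<in>UNIV. (M i j * Q i k) *\<^sub>R f j)"
    by (rule sum.swap)
  also have "\<dots> = (\<Sum>i\<in>UNIV. \<Sum>j\<in>UNIV. - ((M i j * Q j k) *\<^sub>R f i))"
    by (rule sum.cong[OF refl], rule sum.cong[OF refl]) (subst anti, simp)
  also have "(\<Sum>i\<in>UNIV. \<Sum>j\<in>UNIV. (M i j * Q j k) *\<^sub>R f i)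
      - (\<Sum>i\<in>UNIV. \<Sum>j\<in>UNIV. - ((M i j * Q j k) *\<^sub>R f i))
      = (\<Sum>i\<in>UNIV. (2 * mm M Q i k) *\<^sub>R f i)"
    unfolding mm_def mult_2 scaleR_add_left sum.distrib
    by (simp add: sum_negf scaleR_sum_left)
  finally show ?thesis .
qed

lemma sum_swap3:
  "(\<Sum>k\<in>(UNIV::'i::finite set). \<Sum>l\<in>(UNIV::'j::finite set). \<Sum>i\<in>(UNIV::'k::finite set). g k l i)
   = (\<Sum>i\<in>UNIV. \<Sum>l\<in>UNIV. \<Sum>k\<in>UNIV. (g k l i :: 'a::comm_monoid_add))"
proof -
  have "(\<Sum>k\<in>(UNIV::'i set). \<Sum>l\<in>(UNIV::'j set). \<Sum>i\<in>(UNIV::'k set). g k l i)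
     = (\<Sum>k\<in>UNIV. \<Sum>i\<in>UNIV. \<Sum>l\<in>UNIV. g k l i)"
    by (rule sum.cong[OF refl], rule sum.swap)
  also have "\<dots> = (\<Sum>i\<in>UNIV. \<Sum>k\<in>UNIV. \<Sum>l\<in>UNIV. g k l i)" by (rule sum.swap)
  also have "\<dots> = (\<Sum>i\<in>UNIV. \<Sum>l\<in>UNIV. \<Sum>k\<in>UNIV. g k l i)"
    by (rule sum.cong[OF refl], rule sum.swap)
  finally show ?thesis .
qed

lemma cliff_step3:
  fixes f :: "'i::finite \<Rightarrow> 'b::real_algebra_1"
  assumes D: "\<And>k. J * f k - f k * J = (\<Sum>i\<in>UNIV. P i k *\<^sub>R f i)"
  shows "J * Jm N f - Jm N f * J
     = Jm (\<lambda>i j. (\<Sum>k\<in>UNIV. P i k * N k j) + (\<Sum>m\<in>UNIV. N i m * P j m)) f"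
proof -
  have r: "J * (f k * f l) - (f k * f l) * J = (J * f k - f k * J) * f l + f k * (J * f l - f l * J)"
    for k l by (simp add: algebra_simps)
  have e1: "J * Jm N f = (\<Sum>k\<in>UNIV. \<Sum>l\<in>UNIV. N k l *\<^sub>R (J * (f k * f l)))"
    unfolding Jm_def by (simp add: sum_distrib_left)
  have e2: "Jm N f * J = (\<Sum>k\<in>UNIV. \<Sum>l\<in>UNIV. N k l *\<^sub>R ((f k * f l) * J))"
    unfolding Jm_def by (simp add: sum_distrib_right)
  have "J * Jm N f - Jm N f * J
     = (\<Sum>k\<in>UNIV. \<Sum>l\<in>UNIV. N k l *\<^sub>R (J * (f k * f l) - (f k * f l) * J))"
    unfolding e1 e2 by (simp only: sum_subtractf[symmetric] scaleR_diff_right)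
  also have "\<dots> = (\<Sum>k\<in>UNIV. \<Sum>l\<in>UNIV. \<Sum>i\<in>UNIV. (N k l * P i k) *\<^sub>R (f i * f l))
       + (\<Sum>k\<in>UNIV. \<Sum>l\<in>UNIV. \<Sum>i\<in>UNIV. (N k l * P i l) *\<^sub>R (f k * f i))"
    unfolding r D by (simp add: sum.distrib[symmetric] scaleR_add_right sum_distrib_left
        sum_distrib_right scaleR_sum_right)
  also have "(\<Sum>k\<in>UNIV. \<Sum>l\<in>UNIV. \<Sum>i\<in>UNIV. (N k l * P i k) *\<^sub>R (f i * f l))
      = (\<Sum>i\<in>UNIV. \<Sum>l\<in>UNIV. \<Sum>k\<in>UNIV. (N k l * P i k) *\<^sub>R (f i * f l))"
    by (rule sum_swap3)
  also have "(\<Sum>k\<in>UNIV. \<Sum>l\<in>UNIV. \<Sum>i\<in>UNIV. (N k l * P i l) *\<^sub>R (f k * f i))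
      = (\<Sum>k\<in>UNIV. \<Sum>i\<in>UNIV. \<Sum>l\<in>UNIV. (N k l * P i l) *\<^sub>R (f k * f i))"
    by (rule sum.cong[OF refl], rule sum.swap)
  finally show ?thesis
    unfolding Jm_def by (simp add: sum.distrib[symmetric] scaleR_add_left scaleR_sum_left mult.commute)
qed

lemma cliff_comm:
  fixes f :: "'i::finite \<Rightarrow> 'b::real_algebra_1"
  assumes rel: "\<And>i j. f i * f j + f j * f i = Q i j *\<^sub>R 1"
    and anti: "\<And>i j. M j i = - M i j"
  shows "comm (Jm M f) (Jm N f)
     = Jm (\<lambda>i j. (\<Sum>k\<in>UNIV. 2 * mm M Q i k * N k j) + (\<Sum>m\<in>UNIV. N i m * (2 * mm M Q j m))) f"
  unfolding comm_def by (rule cliff_step3, rule cliff_step2[OF rel anti])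

lemma Jm_cong: "(\<And>i j. M i j = N i j) \<Longrightarrow> Jm M f = Jm N f"
  by (simp add: Jm_def)

lemma Jm_neg: "Jm (\<lambda>i j. - M i j) f = - Jm M f"
  by (simp add: Jm_def sum_negf)

lemma Jm_zero: "Jm (\<lambda>i j. 0) f = 0"
  by (simp add: Jm_def)


lemma mat_add_rdistrib: "((A::real^'m^'n) + B) ** C = A ** C + B ** C"
  by (simp add: vec_eq_iff matrix_matrix_mult_def sum.distrib distrib_right)
lemma mat_diff_rdistrib: "((A::real^'m^'n) - B) ** C = A ** C - B ** C"
  by (simp add: vec_eq_iff matrix_matrix_mult_def sum_subtractf left_diff_distrib)
lemma mat_diff_ldistrib: "(C::real^'m^'n) ** (A - B) = C ** A - C ** B"
  by (simp add: vec_eq_iff matrix_matrix_mult_def sum_subtractf right_diff_distrib)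
lemma mat_neg_left: "(- (A::real^'m^'n)) ** C = - (A ** C)"
  by (simp add: vec_eq_iff matrix_matrix_mult_def sum_negf)
lemma mat_neg_right: "(C::real^'m^'n) ** (- A) = - (C ** A)"
  by (simp add: vec_eq_iff matrix_matrix_mult_def sum_negf)
lemma mat_scale_left: "(k *\<^sub>R (A::real^'m^'n)) ** C = k *\<^sub>R (A ** C)"
  by (simp add: scalar_matrix_assoc)

lemma sum_pair: "(\<Sum>p\<in>(UNIV::('a::finite \<times> 'b::finite) set). h p) = (\<Sum>c\<in>UNIV. \<Sum>e\<in>UNIV. h (c, e))"
  by (simp add: sum.cartesian_product case_prod_beta')

lemma coord_unique:
  fixes v :: "'k::finite \<Rightarrow> 'h::real_vector"
  assumes indep: "independent (range v)" and inj: "inj v"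
    and eq: "(\<Sum>a\<in>UNIV. c a *\<^sub>R v a) = (\<Sum>a\<in>UNIV. d a *\<^sub>R v a)"
  shows "c = d"
proof -
  define e where "e a = c a - d a" for a
  have e0: "(\<Sum>a\<in>UNIV. e a *\<^sub>R v a) = 0"
    using eq by (simp add: e_def scaleR_diff_left sum_subtractf)
  define u where "u w = e (inv v w)" for w
  have "(\<Sum>w\<in>range v. u w *\<^sub>R w) = (\<Sum>a\<in>UNIV. u (v a) *\<^sub>R v a)"
    by (rule sum.reindex[OF inj_on_subset[OF inj subset_UNIV], unfolded o_def])
  also have "\<dots> = 0" using e0 by (simp add: u_def inv_f_f[OF inj])
  finally have "(\<Sum>w\<in>range v. u w *\<^sub>R w) = 0" .
  hence "\<forall>w\<in>range v. u w = 0"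
    using indep real_vector.dependent_finite[of "range v"] by auto
  hence "\<forall>a. e a = 0" by (simp add: u_def inv_f_f[OF inj])
  thus ?thesis by (auto simp: e_def)
qed

lemma coord_exists:
  fixes v :: "'k::finite \<Rightarrow> 'h::real_vector"
  assumes sp: "span (range v) = UNIV" and inj: "inj v"
  shows "\<exists>c. x = (\<Sum>a\<in>UNIV. c a *\<^sub>R v a)"
proof -
  have "x \<in> span (range v)" using sp by simp
  then obtain u where "x = (\<Sum>w\<in>range v. u w *\<^sub>R w)"
    using real_vector.span_finite[of "range v"] by auto
  also have "\<dots> = (\<Sum>a\<in>UNIV. u (v a) *\<^sub>R v a)"
    by (rule sum.reindex[OF inj_on_subset[OF inj subset_UNIV], unfolded o_def])
  finally show ?thesis by (intro exI[where x="\<lambda>a. u (v a)"])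
qed

lemma coord_eq:
  fixes v :: "'k::finite \<Rightarrow> 'h::real_vector"
  assumes indep: "independent (range v)" and inj: "inj v"
    and x: "x = (\<Sum>a\<in>UNIV. c a *\<^sub>R v a)"
  shows "coord v x = c"
  unfolding coord_def
proof (rule the_equality)
  show "x = (\<Sum>a\<in>UNIV. c a *\<^sub>R v a)" by fact
  fix d assume d: "x = (\<Sum>a\<in>UNIV. d a *\<^sub>R v a)"
  have "(\<Sum>a\<in>UNIV. d a *\<^sub>R v a) = (\<Sum>a\<in>UNIV. c a *\<^sub>R v a)" using d x by (rule subst)
  then show "d = c" by (rule coord_unique[OF indep inj])
qed

lemma coord_rep:
  fixes v :: "'k::finite \<Rightarrow> 'h::real_vector"
  assumes indep: "independent (range v)" and inj: "inj v" and sp: "span (range v) = UNIV"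
  shows "x = (\<Sum>a\<in>UNIV. coord v x a *\<^sub>R v a)"
proof -
  obtain c where c: "x = (\<Sum>a\<in>UNIV. c a *\<^sub>R v a)" using coord_exists[OF sp inj] by blast
  show ?thesis using coord_eq[OF indep inj c] c by simp
qed

lemma coord_add:
  fixes v :: "'k::finite \<Rightarrow> 'h::real_vector"
  assumes indep: "independent (range v)" and inj: "inj v" and sp: "span (range v) = UNIV"
  shows "coord v (x + y) a = coord v x a + coord v y a"
proof -
  have "x + y = (\<Sum>a\<in>UNIV. (coord v x a + coord v y a) *\<^sub>R v a)"
    by (subst coord_rep[OF indep inj sp, of x], subst coord_rep[OF indep inj sp, of y])
       (simp add: scaleR_add_left sum.distrib)
  from coord_eq[OF indep inj this] show ?thesis by simp
qed

lemma coord_neg: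
  fixes v :: "'k::finite \<Rightarrow> 'h::real_vector"
  assumes indep: "independent (range v)" and inj: "inj v" and sp: "span (range v) = UNIV"
  shows "coord v (- x) a = - coord v x a"
proof -
  have "- x = (\<Sum>a\<in>UNIV. (- coord v x a) *\<^sub>R v a)"
    by (subst coord_rep[OF indep inj sp, of x]) (simp add: sum_negf)
  from coord_eq[OF indep inj this] show ?thesis by simp
qed

lemma coord_diff:
  fixes v :: "'k::finite \<Rightarrow> 'h::real_vector"
  assumes indep: "independent (range v)" and inj: "inj v" and sp: "span (range v) = UNIV"
  shows "coord v (x - y) a = coord v x a - coord v y a"
  using coord_add[OF indep inj sp, of x "- y"] coord_neg[OF indep inj sp, of y] by simp

lemma B_expand:
  fixes v :: "'k::finite \<Rightarrow> 'h::real_vector"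
  assumes indep: "independent (range v)" and inj: "inj v" and sp: "span (range v) = UNIV"
    and bil: "bilinear B"
  shows "B x y = (\<Sum>c\<in>UNIV. \<Sum>d\<in>UNIV. coord v x c * B (v c) (v d) * coord v y d)"
proof -
  have "B x y = B (\<Sum>a\<in>UNIV. coord v x a *\<^sub>R v a) (\<Sum>a\<in>UNIV. coord v y a *\<^sub>R v a)"
    using coord_rep[OF indep inj sp, of x] coord_rep[OF indep inj sp, of y] by simp
  also have "\<dots> = (\<Sum>(c,d)\<in>UNIV \<times> UNIV. B (coord v x c *\<^sub>R v c) (coord v y d *\<^sub>R v d))"
    by (rule bilinear_sum[OF bil])
  also have "\<dots> = (\<Sum>c\<in>UNIV. \<Sum>d\<in>UNIV. coord v x c * B (v c) (v d) * coord v y d)"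
    by (simp add: sum_pair bilinear_lmul[OF bil] bilinear_rmul[OF bil] mult_ac)
  finally show ?thesis .
qed

lemma gram_inv:
  fixes v :: "'k::finite \<Rightarrow> 'h::real_vector"
  assumes indep: "independent (range v)" and inj: "inj v" and sp: "span (range v) = UNIV"
    and bil: "bilinear B" and sym: "\<forall>x y. B x y = B y x"
    and nondeg: "\<forall>x. (\<forall>y. B x y = 0) \<longrightarrow> x = 0"
  shows "gram B v ** matrix_inv (gram B v) = mat 1" "matrix_inv (gram B v) ** gram B v = mat 1"
proof -
  let ?g = "gram B v"
  have ker: "\<forall>c. ?g *v c = 0 \<longrightarrow> c = 0"
  proof (intro allI impI)
    fix c :: "real^'k" assume gc: "?g *v c = 0"
    define w where "w = (\<Sum>b\<in>UNIV. (c $ b) *\<^sub>R v b)"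
    have cw: "coord v w = (\<lambda>b. c $ b)" using coord_eq[OF indep inj w_def] .
    have "B y w = 0" for y
    proof -
      have "B y w = (\<Sum>a\<in>UNIV. coord v y a * (\<Sum>b\<in>UNIV. B (v a) (v b) * c $ b))"
        by (simp add: B_expand[OF indep inj sp bil, of y w] cw sum_distrib_left mult.assoc)
      also have "\<dots> = 0"
      proof -
        have "(\<Sum>b\<in>UNIV. B (v a) (v b) * c $ b) = 0" for a
          using gc by (simp add: vec_eq_iff matrix_vector_mult_def gram_def)
        thus ?thesis by simp
      qed
      finally show ?thesis .
    qed
    hence "w = 0" using nondeg sym by metis
    hence "(\<Sum>b\<in>UNIV. (c $ b) *\<^sub>R v b) = (\<Sum>b\<in>UNIV. (0::real) *\<^sub>R v b)" by (simp add: w_def)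
    from coord_unique[OF indep inj this] show "c = 0" by (simp add: vec_eq_iff fun_eq_iff)
  qed
  hence "invertible ?g" using matrix_left_invertible_ker invertible_left_inverse by blast
  hence "\<exists>A'. ?g ** A' = mat 1 \<and> A' ** ?g = mat 1" by (simp add: invertible_def)
  hence "?g ** matrix_inv ?g = mat 1 \<and> matrix_inv ?g ** ?g = mat 1"
    unfolding matrix_inv_def by (rule someI_ex)
  thus "?g ** matrix_inv ?g = mat 1" "matrix_inv ?g ** ?g = mat 1" by auto
qed

lemma gram_sym: "\<forall>x y. B x y = B y x \<Longrightarrow> transpose (gram B v) = gram B v"
  by (simp add: vec_eq_iff transpose_def gram_def)

lemma inv_sym:
  fixes g :: "real^'k^'k"
  assumes "g ** gi = mat 1" "gi ** g = mat 1" "transpose g = g"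
  shows "transpose gi = gi"
proof -
  have "transpose gi ** g = mat 1"
    using arg_cong[OF assms(1), of transpose] by (simp add: matrix_transpose_mul assms(3) transpose_mat)
  hence "transpose gi = transpose gi ** (g ** gi)" using assms(1) by (simp add: matrix_mul_rid)
  also have "\<dots> = gi" by (simp add: matrix_mul_assoc \<open>transpose gi ** g = mat 1\<close> matrix_mul_lid)
  finally show ?thesis .
qed

definition outer :: "('k::finite \<Rightarrow> real) \<Rightarrow> ('k \<Rightarrow> real) \<Rightarrow> real^'k^'k" where
  "outer p q = (\<chi> i j. p i * q j)"

definition sform :: "real^'k^'k \<Rightarrow> ('k::finite \<Rightarrow> real) \<Rightarrow> ('k \<Rightarrow> real) \<Rightarrow> real" where
  "sform g p q = (\<Sum>c\<in>UNIV. \<Sum>d\<in>UNIV. p c * g $ c $ d * q d)"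

lemma O1: "outer p q ** g ** outer r s = sform g q r *\<^sub>R outer p s"
  by (simp add: vec_eq_iff matrix_matrix_mult_def outer_def sform_def sum_distrib_left
      sum_distrib_right mult_ac, subst sum.swap, simp add: mult_ac)

lemma O2: "g ** gi = mat 1 \<Longrightarrow> outer p q ** g ** gi = outer p q"
  by (simp add: matrix_mul_assoc[symmetric] matrix_mul_rid)

lemma O1': "outer p q ** (g ** outer r s) = sform g q r *\<^sub>R outer p s"
  using O1 by (simp add: matrix_mul_assoc)

lemma O3: "gi ** g = mat 1 \<Longrightarrow> gi ** (g ** M) = M"
  by (simp add: matrix_mul_assoc matrix_mul_lid)

lemma XGX:
  fixes g gi :: "real^'k::finite^'k"
  assumes r: "g ** gi = mat 1" and l: "gi ** g = mat 1"
  shows "((-1/2) *\<^sub>R outer a a + (1/4) *\<^sub>R gi) ** g ** ((-1/2) *\<^sub>R outer b b + (1/4) *\<^sub>R gi)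
    = (1/4 * sform g a b) *\<^sub>R outer a b - (1/8) *\<^sub>R outer a a - (1/8) *\<^sub>R outer b b + (1/16) *\<^sub>R gi"
  unfolding matrix_add_ldistrib mat_add_rdistrib mat_scale_left matrix_scalar_ac
  unfolding matrix_mul_assoc[symmetric]
  unfolding O1' r matrix_mul_rid O3[OF l] scaleR_scaleR
  unfolding vec_eq_iff vector_add_component vector_scaleR_component vector_minus_component
    vector_uminus_component
  by (intro allI) (simp add: field_simps)


definition T :: "real^'k::finite^'k \<Rightarrow> real^'l::finite^'l \<Rightarrow> 'k \<times> 'l \<Rightarrow> 'k \<times> 'l \<Rightarrow> real" where
  "T X Gm p q = X $ fst p $ fst q * Gm $ snd p $ snd q"

definition Qg :: "real^'k::finite^'k \<Rightarrow> 'k \<times> 'l \<Rightarrow> 'k \<times> 'l \<Rightarrow> real" where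
  "Qg G p q = (if snd p = snd q then G $ fst p $ fst q else 0)"

lemma mmTQ: "mm (T X Gm) (Qg G) p q = (X ** G) $ fst p $ fst q * Gm $ snd p $ snd q"
proof -
  have "mm (T X Gm) (Qg G) p q
     = (\<Sum>c\<in>UNIV. \<Sum>e\<in>UNIV. if e = snd q then X $ fst p $ c * G $ c $ fst q * Gm $ snd p $ snd q else 0)"
    unfolding mm_def sum_pair by (rule sum.cong[OF refl], rule sum.cong[OF refl]) (auto simp: T_def Qg_def)
  also have "\<dots> = (X ** G) $ fst p $ fst q * Gm $ snd p $ snd q"
    by (simp add: matrix_matrix_mult_def sum_distrib_right)
  finally show ?thesis .
qed

lemma sum2:
  "(\<Sum>c\<in>UNIV. \<Sum>e\<in>UNIV. (P :: real^'k::finite^'k) $ a $ c * (Gm :: real^'l::finite^'l) $ g $ e * (X' $ c $ b * Gm' $ e $ d))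
    = (P ** X') $ a $ b * (Gm ** Gm') $ g $ d"
proof -
  have "(P ** X') $ a $ b * (Gm ** Gm') $ g $ d
      = (\<Sum>c\<in>UNIV. P $ a $ c * X' $ c $ b) * (\<Sum>e\<in>UNIV. Gm $ g $ e * Gm' $ e $ d)"
    by (simp only: matrix_matrix_mult_def vec_lambda_beta)
  also have "\<dots> = (\<Sum>c\<in>UNIV. \<Sum>e\<in>UNIV. (P $ a $ c * X' $ c $ b) * (Gm $ g $ e * Gm' $ e $ d))"
    by (rule sum_product)
  also have "\<dots> = (\<Sum>c\<in>UNIV. \<Sum>e\<in>UNIV. P $ a $ c * Gm $ g $ e * (X' $ c $ b * Gm' $ e $ d))"
    by (rule sum.cong[OF refl], rule sum.cong[OF refl]) (simp only: mult_ac)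
  finally show ?thesis by simp
qed

lemma tens_main:
  fixes X X' G :: "real^'k::finite^'k" and Gm Gm' :: "real^'l::finite^'l"
  assumes XS: "transpose X = X" and GS: "transpose G = G" and GA: "transpose Gm = - Gm"
  shows "(\<Sum>k\<in>UNIV. 2 * mm (T X Gm) (Qg G) i k * T X' Gm' k j)
       + (\<Sum>m\<in>UNIV. T X' Gm' i m * (2 * mm (T X Gm) (Qg G) j m))
     = 2 * ((X ** G ** X') $ fst i $ fst j * (Gm ** Gm') $ snd i $ snd j)
       - 2 * ((X' ** G ** X) $ fst i $ fst j * (Gm' ** Gm) $ snd i $ snd j)"
proof -
  have XG: "(X ** G) $ b $ c = (G ** X) $ c $ b" for b c
  proof -
    have "transpose (X ** G) = G ** X" by (simp add: matrix_transpose_mul XS GS)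
    from arg_cong[OF this, of "\<lambda>A. A $ c $ b"] show ?thesis by (simp add: transpose_def)
  qed
  have GA': "Gm $ d $ e = - Gm $ e $ d" for d e
    using arg_cong[OF GA, of "\<lambda>A. A $ e $ d"] by (simp add: transpose_def)
  have 1: "(\<Sum>k\<in>UNIV. 2 * mm (T X Gm) (Qg G) i k * T X' Gm' k j)
     = 2 * ((X ** G ** X') $ fst i $ fst j * (Gm ** Gm') $ snd i $ snd j)"
  proof -
    have "(\<Sum>k\<in>UNIV. 2 * mm (T X Gm) (Qg G) i k * T X' Gm' k j)
       = 2 * (\<Sum>c\<in>UNIV. \<Sum>e\<in>UNIV. (X ** G) $ fst i $ c * Gm $ snd i $ e * (X' $ c $ fst j * Gm' $ e $ snd j))"
      unfolding sum_pair mmTQ by (simp add: T_def sum_distrib_left mult.assoc)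
    thus ?thesis by (simp only: sum2 matrix_mul_assoc)
  qed
  have 2: "(\<Sum>m\<in>UNIV. T X' Gm' i m * (2 * mm (T X Gm) (Qg G) j m))
     = - 2 * ((X' ** (G ** X)) $ fst i $ fst j * (Gm' ** Gm) $ snd i $ snd j)"
  proof -
    have "(\<Sum>m\<in>UNIV. T X' Gm' i m * (2 * mm (T X Gm) (Qg G) j m))
       = - 2 * (\<Sum>c\<in>UNIV. \<Sum>e\<in>UNIV. X' $ fst i $ c * Gm' $ snd i $ e * ((G ** X) $ c $ fst j * Gm $ e $ snd j))"
      unfolding sum_pair mmTQ XG
      by (simp add: T_def sum_distrib_left sum_negf GA'[of "snd j"] algebra_simps)
    thus ?thesis by (simp only: sum2)
  qed
  show ?thesis unfolding 1 2 by (simp add: matrix_mul_assoc)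
qed

lemma T_anti:
  assumes XS: "transpose X = X" and GA: "transpose Gm = - Gm"
  shows "T X Gm q p = - T X Gm p q"
proof -
  have 1: "X $ fst q $ fst p = X $ fst p $ fst q"
    using arg_cong[OF XS, of "\<lambda>A. A $ fst p $ fst q"] by (simp add: transpose_def)
  have 2: "Gm $ snd q $ snd p = - Gm $ snd p $ snd q"
    using arg_cong[OF GA, of "\<lambda>A. A $ snd p $ snd q"] by (simp add: transpose_def)
  show ?thesis unfolding T_def 1 2 by simp
qed

lemma Jhat_Jm: "Jhat B v x Gm phi = Jm (T (Xmat B v x) Gm) (\<lambda>p. phi (fst p) (snd p))"
proof -
  have "Jm (T (Xmat B v x) Gm) (\<lambda>p. phi (fst p) (snd p))
     = (\<Sum>a\<in>UNIV. \<Sum>g\<in>UNIV. \<Sum>b\<in>UNIV. \<Sum>d\<in>UNIV.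
          (Xmat B v x $ a $ b * Gm $ g $ d) *\<^sub>R (phi a g * phi b d))"
    unfolding Jm_def sum_pair by (simp add: T_def)
  also have "\<dots> = Jhat B v x Gm phi"
    unfolding Jhat_def by (rule sum.cong[OF refl], rule sum.swap)
  finally show ?thesis by (rule sym)
qed


context
  fixes B :: "'h::real_vector \<Rightarrow> 'h \<Rightarrow> real" and v :: "'k::finite \<Rightarrow> 'h"
  assumes indep: "independent (range v)" and injv: "inj v" and sp: "span (range v) = UNIV"
    and bil: "bilinear B" and sym: "\<forall>x y. B x y = B y x"
    and nondeg: "\<forall>x. (\<forall>y. B x y = 0) \<longrightarrow> x = 0"
begin

lemma gr: "gram B v ** matrix_inv (gram B v) = mat 1"
  using gram_inv[OF indep injv sp bil sym nondeg] by simp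
lemma gl: "matrix_inv (gram B v) ** gram B v = mat 1"
  using gram_inv[OF indep injv sp bil sym nondeg] by simp
lemma giS: "transpose (matrix_inv (gram B v)) = matrix_inv (gram B v)"
  by (rule inv_sym[OF gr gl gram_sym[OF sym]])

lemma Xo: "Xmat B v x = (-1/2) *\<^sub>R outer (coord v x) (coord v x) + (1/4) *\<^sub>R matrix_inv (gram B v)"
  unfolding Xmat_def outer_def
  by (rule vec_eq_iff[THEN iffD2], intro allI, rule vec_eq_iff[THEN iffD2], intro allI) simp

lemma Bs: "B x y = sform (gram B v) (coord v x) (coord v y)"
  by (subst B_expand[OF indep injv sp bil]) (simp add: sform_def gram_def mult_ac)

lemma XP: "Xmat B v x ** gram B v ** Xmat B v y
   = (1/4 * B x y) *\<^sub>R outer (coord v x) (coord v y) - (1/8) *\<^sub>R outer (coord v x) (coord v x)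
     - (1/8) *\<^sub>R outer (coord v y) (coord v y) + (1/16) *\<^sub>R matrix_inv (gram B v)"
proof -
  have "Xmat B v x ** gram B v ** Xmat B v y
   = (1/4 * sform (gram B v) (coord v x) (coord v y)) *\<^sub>R outer (coord v x) (coord v y) - (1/8) *\<^sub>R outer (coord v x) (coord v x)
     - (1/8) *\<^sub>R outer (coord v y) (coord v y) + (1/16) *\<^sub>R matrix_inv (gram B v)"
    unfolding Xo by (rule XGX[OF gr gl])
  thus ?thesis by (simp only: Bs[of x y, symmetric])
qed

lemma XPc: "(Xmat B v x ** gram B v ** Xmat B v y) $ i $ j
   = 1/4 * B x y * coord v x i * coord v y j - 1/8 * coord v x i * coord v x j
     - 1/8 * coord v y i * coord v y j + 1/16 * matrix_inv (gram B v) $ i $ j"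
  unfolding XP by (simp add: outer_def)

lemma giS': "matrix_inv (gram B v) $ j $ i = matrix_inv (gram B v) $ i $ j"
  using arg_cong[OF giS, of "\<lambda>A. A $ i $ j"] by (simp add: transpose_def)

lemma XS: "transpose (Xmat B v x) = Xmat B v x"
  by (simp add: vec_eq_iff transpose_def Xmat_def giS' mult.commute)

lemma C2: "B x y = 0 \<Longrightarrow>
   Xmat B v x ** gram B v ** Xmat B v y - Xmat B v y ** gram B v ** Xmat B v x = 0"
  using sym by (simp add: vec_eq_iff XPc)

lemma C3: "B x y = -1 \<Longrightarrow>
   Xmat B v x ** gram B v ** Xmat B v y + Xmat B v y ** gram B v ** Xmat B v x
     = (1/2) *\<^sub>R Xmat B v (x + y)"
proof -
  assume h: "B x y = -1"
  hence h': "B y x = -1" using sym by metis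
  show ?thesis
  proof -
    have "(Xmat B v x ** gram B v ** Xmat B v y + Xmat B v y ** gram B v ** Xmat B v x) $ i $ j
      = ((1/2) *\<^sub>R Xmat B v (x + y)) $ i $ j" for i j
      unfolding vector_add_component vector_scaleR_component XPc h h'
      by (simp add: Xmat_def coord_add[OF indep injv sp] field_simps)
    thus ?thesis by (simp add: vec_eq_iff)
  qed
qed

lemma C4: "B x y = 1 \<Longrightarrow>
   Xmat B v x ** gram B v ** Xmat B v y + Xmat B v y ** gram B v ** Xmat B v x
     = (1/2) *\<^sub>R Xmat B v (x - y)"
proof -
  assume h: "B x y = 1"
  hence h': "B y x = 1" using sym by metis
  show ?thesis
  proof -
    have "(Xmat B v x ** gram B v ** Xmat B v y + Xmat B v y ** gram B v ** Xmat B v x) $ i $ j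
      = ((1/2) *\<^sub>R Xmat B v (x - y)) $ i $ j" for i j
      unfolding vector_add_component vector_scaleR_component XPc h h'
      by (simp add: Xmat_def coord_diff[OF indep injv sp] field_simps)
    thus ?thesis by (simp add: vec_eq_iff)
  qed
qed

lemma Xneg: "Xmat B v (- x) = Xmat B v x"
  by (simp add: vec_eq_iff Xmat_def coord_neg[OF indep injv sp])

end


lemma vaux1:
  fixes x y :: "real^'m^'n"
  assumes h: "(- (1/4)) *\<^sub>R y - x - (x - (- (1/4)) *\<^sub>R y) = - y"
  shows "x = (1/4) *\<^sub>R y"
proof -
  have "x $ i $ j = ((1/4) *\<^sub>R y) $ i $ j" for i j
  proof -
    have "((- (1/4)) *\<^sub>R y - x - (x - (- (1/4)) *\<^sub>R y)) $ i $ j = (- y) $ i $ j" using h by simp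
    thus ?thesis by simp
  qed
  thus ?thesis by (simp add: vec_eq_iff)
qed

lemma vaux2:
  fixes x y :: "real^'m^'n"
  assumes h: "(1/4) *\<^sub>R x = (- (1/4)) *\<^sub>R y"
  shows "x = - y"
proof -
  have "x $ i $ j = (- y) $ i $ j" for i j
  proof -
    have "((1/4) *\<^sub>R x) $ i $ j = ((- (1/4)) *\<^sub>R y) $ i $ j" using h by simp
    thus ?thesis by simp
  qed
  thus ?thesis by (simp add: vec_eq_iff)
qed

lemma anticomm_rho:
  fixes a b :: "real^'l::finite^'l"
  assumes aa: "a ** a = - ((1/4) *\<^sub>R mat 1)"
    and r: "a ** (a ** b - b ** a) - (a ** b - b ** a) ** a = - b"
  shows "a ** b = - (b ** a)"
proof -
  have h1: "a ** (a ** b) = (- (1/4)) *\<^sub>R b"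
    by (simp add: matrix_mul_assoc aa mat_neg_left mat_scale_left matrix_mul_lid)
  have h2: "b ** a ** a = (- (1/4)) *\<^sub>R b"
    by (simp add: matrix_mul_assoc[symmetric] aa mat_neg_right matrix_scalar_ac matrix_mul_rid)
  have "a ** (a ** b) - a ** b ** a - (a ** b ** a - b ** a ** a) = - b"
    using r by (simp only: mat_diff_ldistrib mat_diff_rdistrib matrix_mul_assoc)
  hence "(- (1/4)) *\<^sub>R b - a ** b ** a - (a ** b ** a - (- (1/4)) *\<^sub>R b) = - b"
    by (simp only: h1 h2)
  hence P: "a ** b ** a = (1/4) *\<^sub>R b"
    by (rule vaux1)
  have "a ** (a ** b ** a) = (- (1/4)) *\<^sub>R (b ** a)"
    by (simp add: matrix_mul_assoc aa mat_neg_left mat_scale_left matrix_mul_lid)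
  moreover have "a ** (a ** b ** a) = (1/4) *\<^sub>R (a ** b)"
    by (simp only: P matrix_scalar_ac mat_scale_left)
  ultimately have "(1/4) *\<^sub>R (a ** b) = (- (1/4)) *\<^sub>R (b ** a)" by simp
  thus ?thesis by (rule vaux2)
qed

lemma commT:
  fixes f :: "'k::finite \<times> 'l::finite \<Rightarrow> 'b::real_algebra_1"
  assumes relf: "\<And>p q. f p * f q + f q * f p = Qg G p q *\<^sub>R 1"
    and XS: "transpose X = X" and GS: "transpose G = G" and GA: "transpose Gm = - Gm"
  shows "comm (Jm (T X Gm) f) (Jm (T X' Gm') f)
    = Jm (\<lambda>p q. 2 * ((X ** G ** X') $ fst p $ fst q * (Gm ** Gm') $ snd p $ snd q)
       - 2 * ((X' ** G ** X) $ fst p $ fst q * (Gm' ** Gm) $ snd p $ snd q)) f"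
  unfolding cliff_comm[OF relf T_anti[OF XS GA]]
  by (rule Jm_cong, rule tens_main[OF XS GS GA])


lemma G_prod: "(2 *\<^sub>R (a::real^'l::finite^'l)) ** (2 *\<^sub>R b) = 4 *\<^sub>R (a ** b)"
  by (simp only: mat_scale_left matrix_scalar_ac scaleR_scaleR) simp

lemma G_T: "transpose (a::real^'l::finite^'l) = - a \<Longrightarrow> transpose (2 *\<^sub>R a) = - (2 *\<^sub>R a)"
proof -
  assume h: "transpose a = - a"
  have "(transpose (2 *\<^sub>R a)) $ i $ j = (- (2 *\<^sub>R a)) $ i $ j" for i j
  proof -
    have "(transpose a) $ i $ j = (- a) $ i $ j" using h by simp
    thus ?thesis by (simp add: transpose_def)
  qed
  thus ?thesis by (simp add: vec_eq_iff)
qed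

theorem proposition5p1:
  fixes A :: "'n::finite \<Rightarrow> 'n \<Rightarrow> int"
    and al :: "'n \<Rightarrow> 'h::euclidean_space"
    and B :: "'h \<Rightarrow> 'h \<Rightarrow> real"
    and v :: "'k::finite \<Rightarrow> 'h"
    and rho :: "'n \<Rightarrow> real^'l::finite^'l"
  assumes gcm: "simply_laced_symmetrizable_gcm A"
    and dim_h: "DIM('h) = 2 * CARD('n) - rank (cartan_matrix A)"
    and roots_indep: "independent (range al)" and roots_inj: "inj al"
    and B_bil: "bilinear B"
    and B_sym: "\<forall>x y. B x y = B y x"
    and B_nondeg: "\<forall>x. (\<forall>y. B x y = 0) \<longrightarrow> x = 0"
    and B_roots: "\<forall>i j. B (al i) (al j) = real_of_int (A i j)"
    and v_basis: "independent (range v)" "inj v" "span (range v) = UNIV"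
    and rho_spin: "\<forall>i. rho i ** rho i = - ((1/4) *\<^sub>R mat 1)"
    and rho_antisym: "\<forall>i. transpose (rho i) = - rho i"
    and rho_rel1: "\<forall>i j. A i j = -1 \<longrightarrow>
                     rho i ** (rho i ** rho j - rho j ** rho i) - (rho i ** rho j - rho j ** rho i) ** rho i
                       = - rho j"
    and rho_rel0: "\<forall>i j. A i j = 0 \<longrightarrow> rho i ** rho j - rho j ** rho i = 0"
  shows
    "(\<forall>x\<in>lam_set A al. transpose (Xmat B v x) = Xmat B v x)
     \<and> (\<forall>x\<in>lam_set A al. \<forall>y\<in>lam_set A al. B x y = 0 \<longrightarrow>
          Xmat B v x ** gram B v ** Xmat B v y - Xmat B v y ** gram B v ** Xmat B v x = 0)
     \<and> (\<forall>x\<in>lam_set A al. \<forall>y\<in>lam_set A al. B x y = -1 \<longrightarrow> x + y \<in> lam_set A al \<longrightarrow>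
          Xmat B v x ** gram B v ** Xmat B v y + Xmat B v y ** gram B v ** Xmat B v x
            = (1/2) *\<^sub>R Xmat B v (x + y))
     \<and> (\<forall>x\<in>lam_set A al. \<forall>y\<in>lam_set A al. B x y = 1 \<longrightarrow> x - y \<in> lam_set A al \<longrightarrow>
          Xmat B v x ** gram B v ** Xmat B v y + Xmat B v y ** gram B v ** Xmat B v x
            = (1/2) *\<^sub>R Xmat B v (x - y))
     \<and> (\<forall>(phi :: 'k \<Rightarrow> 'l \<Rightarrow> 'b::real_algebra_1).
          (\<forall>a b g d. phi a g * phi b d + phi b d * phi a g
                       = (if g = d then B (v a) (v b) else 0) *\<^sub>R 1) \<longrightarrow>
          (\<forall>i j. A i j = -1 \<longrightarrow>
             comm (Jhat B v (al i) (2 *\<^sub>R rho i) phi)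
                  (comm (Jhat B v (al i) (2 *\<^sub>R rho i) phi) (Jhat B v (al j) (2 *\<^sub>R rho j) phi))
             = - Jhat B v (al j) (2 *\<^sub>R rho j) phi)
          \<and> (\<forall>i j. A i j = 0 \<longrightarrow>
             comm (Jhat B v (al i) (2 *\<^sub>R rho i) phi) (Jhat B v (al j) (2 *\<^sub>R rho j) phi) = 0))"
proof -
  note hyps = v_basis(1) v_basis(2) v_basis(3) B_bil B_sym B_nondeg
  let ?G = "gram B v"
  have XS: "\<And>x. transpose (Xmat B v x) = Xmat B v x" by (rule XS[OF hyps])
  have GS: "transpose ?G = ?G" by (rule gram_sym[OF B_sym])
  have C2: "\<And>x y. B x y = 0 \<Longrightarrow>
      Xmat B v x ** ?G ** Xmat B v y - Xmat B v y ** ?G ** Xmat B v x = 0" by (rule C2[OF hyps])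
  have C3: "\<And>x y. B x y = -1 \<Longrightarrow>
      Xmat B v x ** ?G ** Xmat B v y + Xmat B v y ** ?G ** Xmat B v x = (1/2) *\<^sub>R Xmat B v (x + y)"
    by (rule C3[OF hyps])
  have C4: "\<And>x y. B x y = 1 \<Longrightarrow>
      Xmat B v x ** ?G ** Xmat B v y + Xmat B v y ** ?G ** Xmat B v x = (1/2) *\<^sub>R Xmat B v (x - y)"
    by (rule C4[OF hyps])
  have Xneg: "\<And>x. Xmat B v (- x) = Xmat B v x" by (rule Xneg[OF hyps])
  have part5: "\<forall>(phi :: 'k \<Rightarrow> 'l \<Rightarrow> 'b::real_algebra_1).
          (\<forall>a b g d. phi a g * phi b d + phi b d * phi a g
                       = (if g = d then B (v a) (v b) else 0) *\<^sub>R 1) \<longrightarrow>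
          (\<forall>i j. A i j = -1 \<longrightarrow>
             comm (Jhat B v (al i) (2 *\<^sub>R rho i) phi)
                  (comm (Jhat B v (al i) (2 *\<^sub>R rho i) phi) (Jhat B v (al j) (2 *\<^sub>R rho j) phi))
             = - Jhat B v (al j) (2 *\<^sub>R rho j) phi)
          \<and> (\<forall>i j. A i j = 0 \<longrightarrow>
             comm (Jhat B v (al i) (2 *\<^sub>R rho i) phi) (Jhat B v (al j) (2 *\<^sub>R rho j) phi) = 0)"
  proof (intro allI impI)
    fix phi :: "'k \<Rightarrow> 'l \<Rightarrow> 'b::real_algebra_1"
    assume rel: "\<forall>a b g d. phi a g * phi b d + phi b d * phi a g
                       = (if g = d then B (v a) (v b) else 0) *\<^sub>R 1"
    define f where "f = (\<lambda>p. phi (fst p) (snd p))"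
    have relf: "\<And>p q. f p * f q + f q * f p = Qg ?G p q *\<^sub>R 1"
    proof -
      fix p q :: "'k \<times> 'l"
      show "f p * f q + f q * f p = Qg ?G p q *\<^sub>R 1"
        using rel[rule_format, of "fst p" "snd p" "fst q" "snd q"]
        by (simp add: f_def Qg_def gram_def)
    qed
    define Gm where "Gm i = 2 *\<^sub>R rho i" for i
    have GA: "\<And>i. transpose (Gm i) = - Gm i"
      unfolding Gm_def using G_T rho_antisym by blast
    have GG: "\<And>i. Gm i ** Gm i = - mat 1"
      unfolding Gm_def G_prod using rho_spin by simp
    have J: "\<And>x i. Jhat B v x (2 *\<^sub>R rho i) phi = Jm (T (Xmat B v x) (Gm i)) f"
      by (simp add: Jhat_Jm f_def Gm_def)
    have CT: "\<And>x i X' Gm'. comm (Jm (T (Xmat B v x) (Gm i)) f) (Jm (T X' Gm') f)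
      = Jm (\<lambda>p q. 2 * ((Xmat B v x ** ?G ** X') $ fst p $ fst q * (Gm i ** Gm') $ snd p $ snd q)
       - 2 * ((X' ** ?G ** Xmat B v x) $ fst p $ fst q * (Gm' ** Gm i) $ snd p $ snd q)) f"
      by (rule commT[OF relf XS GS GA])
    show "(\<forall>i j. A i j = -1 \<longrightarrow>
             comm (Jhat B v (al i) (2 *\<^sub>R rho i) phi)
                  (comm (Jhat B v (al i) (2 *\<^sub>R rho i) phi) (Jhat B v (al j) (2 *\<^sub>R rho j) phi))
             = - Jhat B v (al j) (2 *\<^sub>R rho j) phi)
          \<and> (\<forall>i j. A i j = 0 \<longrightarrow>
             comm (Jhat B v (al i) (2 *\<^sub>R rho i) phi) (Jhat B v (al j) (2 *\<^sub>R rho j) phi) = 0)"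
    proof (intro conjI allI impI)
      fix i j assume h: "A i j = -1"
      have anti: "rho i ** rho j = - (rho j ** rho i)"
        using anticomm_rho[of "rho i" "rho j"] rho_spin rho_rel1 h by blast
      define K where "K = Gm i ** Gm j"
      have K1: "Gm j ** Gm i = - K"
        unfolding K_def Gm_def G_prod anti by simp
      have K2: "Gm i ** K = - Gm j"
        unfolding K_def matrix_mul_assoc GG mat_neg_left matrix_mul_lid ..
      have K3: "K ** Gm i = Gm j"
        unfolding K_def matrix_mul_assoc[symmetric] K1
        by (simp add: mat_neg_right K2[unfolded K_def])
      have Bij: "B (al i) (al j) = -1" using B_roots h by simp
      have Bii: "B (al i) (al i) = 2"
        using B_roots gcm unfolding simply_laced_symmetrizable_gcm_def by simp
      have Bi2: "B (al i) (al i + al j) = 1"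
        using Bii Bij bilinear_radd[OF B_bil] by simp
      let ?Xi = "Xmat B v (al i)" and ?Xj = "Xmat B v (al j)" and ?Y = "Xmat B v (al i + al j)"
      have s1: "comm (Jm (T ?Xi (Gm i)) f) (Jm (T ?Xj (Gm j)) f) = Jm (T ?Y K) f"
        unfolding CT
      proof (rule Jm_cong)
        fix p q :: "'k \<times> 'l"
        have c: "(?Xi ** ?G ** ?Xj) $ fst p $ fst q + (?Xj ** ?G ** ?Xi) $ fst p $ fst q
            = 1/2 * ?Y $ fst p $ fst q"
          using arg_cong[OF C3[OF Bij], of "\<lambda>M. M $ fst p $ fst q"] by simp
        have "2 * ((?Xi ** ?G ** ?Xj) $ fst p $ fst q * K $ snd p $ snd q)
           - 2 * ((?Xj ** ?G ** ?Xi) $ fst p $ fst q * (- K) $ snd p $ snd q)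
           = 2 * ((?Xi ** ?G ** ?Xj) $ fst p $ fst q + (?Xj ** ?G ** ?Xi) $ fst p $ fst q)
              * K $ snd p $ snd q"
          by (simp add: algebra_simps)
        also have "\<dots> = T ?Y K p q" unfolding c by (simp add: T_def)
        finally show "2 * ((?Xi ** ?G ** ?Xj) $ fst p $ fst q * (Gm i ** Gm j) $ snd p $ snd q)
           - 2 * ((?Xj ** ?G ** ?Xi) $ fst p $ fst q * (Gm j ** Gm i) $ snd p $ snd q)
           = T ?Y K p q" unfolding K1 K_def[symmetric] .
      qed
      have s2: "comm (Jm (T ?Xi (Gm i)) f) (Jm (T ?Y K) f) = - Jm (T ?Xj (Gm j)) f"
        unfolding CT Jm_neg[symmetric]
      proof (rule Jm_cong)
        fix p q :: "'k \<times> 'l"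
        have e: "al i - (al i + al j) = - al j" by simp
        have c: "(?Xi ** ?G ** ?Y) $ fst p $ fst q + (?Y ** ?G ** ?Xi) $ fst p $ fst q
            = 1/2 * ?Xj $ fst p $ fst q"
          using arg_cong[OF C4[OF Bi2], of "\<lambda>M. M $ fst p $ fst q"] by (simp add: e Xneg)
        have "2 * ((?Xi ** ?G ** ?Y) $ fst p $ fst q * (- Gm j) $ snd p $ snd q)
           - 2 * ((?Y ** ?G ** ?Xi) $ fst p $ fst q * Gm j $ snd p $ snd q)
           = - (2 * ((?Xi ** ?G ** ?Y) $ fst p $ fst q + (?Y ** ?G ** ?Xi) $ fst p $ fst q)
              * Gm j $ snd p $ snd q)"
          by (simp add: algebra_simps)
        also have "\<dots> = - T ?Xj (Gm j) p q" unfolding c by (simp add: T_def)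
        finally show "2 * ((?Xi ** ?G ** ?Y) $ fst p $ fst q * (Gm i ** K) $ snd p $ snd q)
           - 2 * ((?Y ** ?G ** ?Xi) $ fst p $ fst q * (K ** Gm i) $ snd p $ snd q)
           = - T ?Xj (Gm j) p q" unfolding K2 K3 .
      qed
      show "comm (Jhat B v (al i) (2 *\<^sub>R rho i) phi)
                  (comm (Jhat B v (al i) (2 *\<^sub>R rho i) phi) (Jhat B v (al j) (2 *\<^sub>R rho j) phi))
             = - Jhat B v (al j) (2 *\<^sub>R rho j) phi"
        unfolding J s1 s2 ..
    next
      fix i j assume h: "A i j = 0"
      have Bij: "B (al i) (al j) = 0" using B_roots h by simp
      have P: "Xmat B v (al i) ** ?G ** Xmat B v (al j) = Xmat B v (al j) ** ?G ** Xmat B v (al i)"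
        using C2[OF Bij] by simp
      have cm: "rho i ** rho j = rho j ** rho i" using rho_rel0[rule_format, OF h] by simp
      have GC: "Gm i ** Gm j = Gm j ** Gm i" unfolding Gm_def G_prod cm ..
      show "comm (Jhat B v (al i) (2 *\<^sub>R rho i) phi) (Jhat B v (al j) (2 *\<^sub>R rho j) phi) = 0"
        unfolding J CT P GC by (simp add: Jm_zero)
    qed
  qed
  show ?thesis using XS C2 C3 C4 part5 by blast
qed


end
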